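(* Let $k$ and $s$ be positive integers with $s\mid k$. Then for every integer $t$ with $0\le t\le s-1$, $$c_{s}(t)=\sum_{j=0}^{k/s-1}\sigma_{k}^{(0)}(js+t;s).$$
   Context: For a positive integer $m$, $(q)_m=(1-q)\cdots(1-q^m)$, $(q)_0=1$. For integers $k\ge1$ and $1\le s\le k$, $\sigma^{(0)}_k(t;s)$ ($0\le t\le k-1$) is the coefficient of $q^t$ in the remainder of $(q)_{s-1}$ upon division by $1-q^k$. $c_s(t)=\sum_{1\le h\le s,\ \gcd(h,s)=1}e^{2\pi i ht/s}$ is the Ramanujan sum. *)

theory Defs
  imports Complex_Main "HOL-Computational_Algebra.Polynomial"
begin

definition qpoch :: "nat \<Rightarrow> complex poly" where
  "qpoch m = (\<Prod>i\<in>{1..m}. 1 - monom 1 i)"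

definition sigma0 :: "nat \<Rightarrow> nat \<Rightarrow> nat \<Rightarrow> complex" where
  "sigma0 k t s = coeff (qpoch (s - 1) mod (1 - monom 1 k)) t"

definition ramanujan_sum :: "nat \<Rightarrow> int \<Rightarrow> complex" where
  "ramanujan_sum s t = (\<Sum>h\<in>{h. 1 \<le> h \<and> h \<le> s \<and> coprime h s}.
      exp (2 * pi * \<i> * of_nat h * of_int t / of_nat s))"

end

theory Submission
  imports Defs "HOL-Analysis.Analysis"
begin

lemma prod_roots_dvd:
  fixes p :: "complex poly"
  assumes "finite A" "\<forall>a\<in>A. poly p a = 0"
  shows "(\<Prod>a\<in>A. [:-a,1:]) dvd p"
  using assms
proof (induction A rule: finite_induct)
  case empty then show ?case by simp
next
  case (insert a A)
  then obtain q where q: "p = (\<Prod>b\<in>A. [:-b,1:]) * q" by (auto elim!: dvdE)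
  have "poly (\<Prod>b\<in>A. [:-b,1:]) a \<noteq> 0"
    using insert.hyps by (auto simp: poly_prod)
  moreover have "poly p a = 0" using insert.prems by auto
  ultimately have "poly q a = 0" using q by simp
  then obtain r where "q = [:-a,1:] * r" by (auto simp: poly_eq_0_iff_dvd elim!: dvdE)
  then have "p = ([:-a,1:] * (\<Prod>b\<in>A. [:-b,1:])) * r"
    using q by (metis mult.assoc mult.commute)
  then have "p = (\<Prod>b\<in>insert a A. [:-b,1:]) * r"
    using insert.hyps by (subst prod.insert) auto
  then show ?case by simp
qed

lemma prod_roots_eq:
  fixes p :: "complex poly"
  assumes "p \<noteq> 0" "finite A" "\<forall>a\<in>A. poly p a = 0" "card A = degree p"
  shows "p = smult (lead_coeff p) (\<Prod>a\<in>A. [:-a,1:])"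
proof -
  obtain q where q: "p = (\<Prod>a\<in>A. [:-a,1:]) * q"
    using prod_roots_dvd[OF assms(2,3)] by (auto elim!: dvdE)
  have q0: "q \<noteq> 0" using q assms(1) by auto
  have dP: "degree (\<Prod>a\<in>A. [:-a,1:]) = card A"
    by (subst degree_prod_sum_eq) auto
  have P0: "(\<Prod>a\<in>A. [:-a,1:]) \<noteq> 0" using assms(2) by (simp add: prod_zero_iff) 
  have "degree p = card A + degree q" using q q0 P0 dP by (simp add: degree_mult_eq)
  then have "degree q = 0" using assms(4) by simp
  then obtain c where c: "q = [:c:]" by (auto elim: degree_eq_zeroE)
  have lP: "lead_coeff (\<Prod>a\<in>A. [:-a,1:]) = 1" by (simp add: lead_coeff_prod)
  have "lead_coeff p = c" using q c lP by (simp add: lead_coeff_mult)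
  then show ?thesis using q c lP by (simp add: mult.commute)
qed

lemma geom_poly: "[:-1,1:] * (\<Sum>j<n. monom (1::complex) j) = monom 1 n - 1"
proof -
  have "poly ([:-1,1:] * (\<Sum>j<n. monom (1::complex) j)) x = poly (monom 1 n - 1) x" for x
  proof -
    have "poly ([:-1,1:] * (\<Sum>j<n. monom (1::complex) j)) x = (x - 1) * (\<Sum>j<n. x^j)"
      by (simp add: poly_sum poly_monom algebra_simps)
    also have "\<dots> = x^n - 1" by (simp add: power_diff_1_eq)
    finally show ?thesis by (simp add: poly_monom)
  qed
  then show ?thesis using poly_eq_poly_eq_iff by blast
qed

lemma roots_unity_prod:
  fixes z :: complex
  assumes s: "s > 0" and zs: "z ^ s = 1" and prim: "\<And>i. 0 < i \<Longrightarrow> i < s \<Longrightarrow> z ^ i \<noteq> 1"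
  shows "(\<Prod>i\<in>{1..<s}. 1 - z ^ i) = of_nat s"
proof -
  define G where "G = (\<Sum>j<s. monom (1::complex) j)"
  define p where "p = (monom (1::complex) s - 1)"
  have pG: "[:-1,1:] * G = p" unfolding G_def p_def by (rule geom_poly)
  have dp: "degree p = s"
  proof -
    have "p = monom 1 s + (- 1)" unfolding p_def by simp
    also have "degree \<dots> = s" using s by (subst degree_add_eq_left) (auto simp: degree_monom_eq)
    finally show ?thesis .
  qed
  have lp: "lead_coeff p = 1" using s unfolding dp by (simp add: p_def coeff_monom)
  have G0: "G \<noteq> 0" using pG dp s by auto
  have dG: "degree G = s - 1"
  proof -
    have "degree ([:-1,1:] * G) = degree [:-1,1::complex:] + degree G" using G0 by (intro degree_mult_eq) auto
    then show ?thesis using pG dp by simp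
  qed
  have lG: "lead_coeff G = 1" using pG lp by (metis lead_coeff_mult lead_coeff_pCons(1) mult_cancel_right2 one_neq_zero pCons_one lead_coeff_1)
  have z0: "z \<noteq> 0" using zs s by (metis power_0_left less_irrefl_nat zero_neq_one)
  have inj: "inj_on (\<lambda>i. z ^ i) {1..<s}"
  proof (rule inj_onI)
    have *: "i = j" if "i \<in> {1..<s}" "j \<in> {1..<s}" "z ^ i = z ^ j" "i \<le> j" for i j
    proof (rule ccontr)
      assume "i \<noteq> j"
      have "z ^ j = z ^ i * z ^ (j - i)" using that(4) by (simp flip: power_add)
      then have "z ^ j = z ^ j * z ^ (j - i)" using that(3) by simp
      then have "z ^ (j - i) = 1" using that z0 by simp
      moreover have "0 < j - i" "j - i < s" using that \<open>i \<noteq> j\<close> by auto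
      ultimately show False using prim by blast
    qed
    fix i j assume "i \<in> {1..<s}" "j \<in> {1..<s}" "z ^ i = z ^ j"
    then show "i = j" using *[of i j] *[of j i] by (cases "i \<le> j") auto
  qed
  define A where "A = (\<lambda>i. z ^ i) ` {1..<s}"
  have cA: "card A = degree G" unfolding A_def using inj dG by (simp add: card_image)
  have rA: "\<forall>a\<in>A. poly G a = 0"
  proof
    fix a assume "a \<in> A"
    then obtain i where i: "i \<in> {1..<s}" "a = z ^ i" unfolding A_def by auto
    have "poly p a = 0" using i zs by (simp add: p_def poly_monom flip: power_mult) (metis mult.commute power_mult power_one)
    moreover have "a - 1 \<noteq> 0" using i prim by auto
    ultimately show "poly G a = 0" using pG by (metis (no_types, lifting) add.commute diff_conv_add_uminus mult_eq_0_iff poly_mult poly_pCons mult.right_neutral poly_0 add_0)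
  qed
  have "G = smult (lead_coeff G) (\<Prod>a\<in>A. [:-a,1:])"
    by (rule prod_roots_eq[OF G0 _ rA cA]) (simp add: A_def)
  then have "poly G 1 = (\<Prod>a\<in>A. 1 - a)" using lG by (simp add: poly_prod)
  also have "\<dots> = (\<Prod>i\<in>{1..<s}. 1 - z ^ i)" unfolding A_def using inj by (simp add: prod.reindex)
  finally show ?thesis by (simp add: G_def poly_sum poly_monom)
qed

definition omega :: "nat \<Rightarrow> complex" where
  "omega s = exp (2 * of_real pi * \<i> / of_nat s)"

lemma omega_pow: "omega s ^ m = exp (2 * of_real pi * \<i> * of_nat m / of_nat s)"
proof -
  have "omega s ^ m = exp (of_nat m * (2 * of_real pi * \<i> / of_nat s))"
    unfolding omega_def by (rule exp_of_nat_mult[symmetric])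
  also have "of_nat m * (2 * of_real pi * \<i> / of_nat s) = 2 * of_real pi * \<i> * of_nat m / of_nat s"
    by simp
  finally show ?thesis .
qed

lemma omega_pow_eq_1: "s > 0 \<Longrightarrow> omega s ^ m = 1 \<longleftrightarrow> s dvd m"
  unfolding omega_pow by (rule complex_root_unity_eq_1) simp

lemma geom_root_sum:
  fixes z :: complex
  assumes "z ^ s = 1"
  shows "(\<Sum>l<s. z ^ l) = (if z = 1 then of_nat s else 0)"
proof (cases "z = 1")
  case False
  have "z ^ s - 1 = (z - 1) * (\<Sum>l<s. z ^ l)" by (rule power_diff_1_eq)
  then show ?thesis using assms False by simp
qed simp

lemma mod_iff_dvd_shift:
  fixes n r s :: nat
  assumes "r < s"
  shows "s dvd (n + (s - r)) \<longleftrightarrow> n mod s = r"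
proof -
  have "s dvd (n + (s - r)) \<longleftrightarrow> (n mod s + (s - r)) mod s = 0"
    by (simp add: dvd_eq_mod_eq_0 mod_add_left_eq)
  also have "\<dots> \<longleftrightarrow> n mod s + (s - r) = s"
  proof -
    have ns: "n mod s < s" using assms by simp
    then have lt: "n mod s + (s - r) < 2 * s" "0 < n mod s + (s - r)" using assms ns by linarith+
    show ?thesis
    proof
      assume "(n mod s + (s - r)) mod s = 0"
      then obtain c where c: "n mod s + (s - r) = s * c" by (auto simp: dvd_eq_mod_eq_0[symmetric] elim!: dvdE)
      then have "c < 2" "c > 0" using lt by (auto simp: mult.commute)
      then have "c = 1" by simp
      then show "n mod s + (s - r) = s" using c by simp
    qed simp
  qed
  also have "\<dots> \<longleftrightarrow> n mod s = r" using assms by auto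
  finally show ?thesis .
qed

lemma poly_as_sum:
  fixes R :: "complex poly"
  assumes "degree R < N"
  shows "poly R x = (\<Sum>n<N. coeff R n * x ^ n)"
proof -
  have "poly R x = (\<Sum>n\<le>degree R. coeff R n * x ^ n)" by (rule poly_altdef)
  also have "\<dots> = (\<Sum>n<N. coeff R n * x ^ n)"
    using assms by (intro sum.mono_neutral_left) (auto simp: coeff_eq_0)
  finally show ?thesis .
qed

lemma filter_lemma:
  fixes R :: "complex poly"
  assumes "degree R < N" "r < s"
  shows "(\<Sum>l<s. omega s ^ (l * (s - r)) * poly R (omega s ^ l))
         = of_nat s * (\<Sum>n\<in>{n. n < N \<and> n mod s = r}. coeff R n)"
proof -
  have s: "s > 0" using assms by simp
  have "(\<Sum>l<s. omega s ^ (l * (s - r)) * poly R (omega s ^ l))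
      = (\<Sum>l<s. \<Sum>n<N. coeff R n * (omega s ^ (n + (s - r))) ^ l)"
    by (simp add: poly_as_sum[OF assms(1)] sum_distrib_left algebra_simps flip: power_mult power_add)
  also have "\<dots> = (\<Sum>n<N. coeff R n * (\<Sum>l<s. (omega s ^ (n + (s - r))) ^ l))"
    by (subst sum.swap) (simp add: sum_distrib_left)
  also have "\<dots> = (\<Sum>n<N. if n mod s = r then coeff R n * of_nat s else 0)"
  proof (intro sum.cong refl)
    fix n
    have "(omega s ^ (n + (s - r))) ^ s = 1"
      using s by (simp flip: power_mult) (simp add: mult.commute omega_pow_eq_1[OF s])
    then show "coeff R n * (\<Sum>l<s. (omega s ^ (n + (s - r))) ^ l) = (if n mod s = r then coeff R n * of_nat s else 0)"
      using omega_pow_eq_1[OF s, of "n + (s - r)"] mod_iff_dvd_shift[OF assms(2), of n]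
      by (simp add: geom_root_sum)
  qed
  also have "\<dots> = (\<Sum>n\<in>{n. n < N \<and> n mod s = r}. coeff R n * of_nat s)"
    by (subst sum.If_cases) (auto intro!: sum.cong)
  also have "\<dots> = of_nat s * (\<Sum>n\<in>{n. n < N \<and> n mod s = r}. coeff R n)"
    by (simp add: sum_distrib_left mult.commute)
  finally show ?thesis .
qed

lemma reindex_lemma:
  fixes f :: "nat \<Rightarrow> complex"
  assumes s: "0 < s" and "s dvd k" and t: "t < s"
  shows "(\<Sum>j=0..<k div s. f (j * s + t)) = (\<Sum>n\<in>{n. n < k \<and> n mod s = t}. f n)"
proof -
  obtain m where k: "k = s * m" using assms(2) by (auto elim!: dvdE)
  have km: "k div s = m" using k s by simp
  have inj: "inj_on (\<lambda>j. j * s + t) {0..<m}" using s by (auto intro!: inj_onI)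
  have img: "(\<lambda>j. j * s + t) ` {0..<m} = {n. n < k \<and> n mod s = t}"
  proof safe
    fix j assume "j \<in> {0..<m}"
    then have "Suc j \<le> m" by simp
    then have "Suc j * s \<le> m * s" by (rule mult_le_mono1)
    then show "j * s + t < k" using t k by (simp add: mult.commute)
    show "(j * s + t) mod s = t" using t by simp
  next
    fix n assume n: "n < k" "t = n mod s"
    have "n div s < m" using n k by (simp add: less_mult_imp_div_less mult.commute)
    moreover have "n = n div s * s + n mod s" by simp
    ultimately show "n \<in> (\<lambda>j. j * s + n mod s) ` {0..<m}" by (metis atLeastLessThan_iff image_eqI zero_le)
  qed
  show ?thesis unfolding km by (subst img[symmetric]) (simp add: sum.reindex[OF inj])
qed

lemma poly_qpoch: "poly (qpoch m) z = (\<Prod>i\<in>{1..m}. 1 - z ^ i)"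
  by (simp add: qpoch_def poly_prod poly_monom)

lemma poly_qpoch_omega:
  assumes s: "0 < s" and l: "l < s"
  shows "poly (qpoch (s - 1)) (omega s ^ l) = (if coprime l s then of_nat s else 0)"
proof -
  have iv: "{1..s-1} = {1..<s}" using s by auto
  show ?thesis
  proof (cases "coprime l s")
    case True
    define z where "z = omega s ^ l"
    have "z ^ s = 1" unfolding z_def using s by (simp flip: power_mult add: omega_pow_eq_1)
    moreover have "z ^ i \<noteq> 1" if "0 < i" "i < s" for i
    proof
      assume "z ^ i = 1"
      then have "s dvd l * i" unfolding z_def using s by (simp flip: power_mult add: omega_pow_eq_1)
      then have "s dvd i" using True by (metis coprime_commute coprime_dvd_mult_right_iff)
      then show False using that by (auto dest: dvd_imp_le)
    qed
    ultimately have pr: "(\<Prod>i\<in>{1..<s}. 1 - z ^ i) = of_nat s" using s by (intro roots_unity_prod) auto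
    have "poly (qpoch (s - 1)) (omega s ^ l) = (\<Prod>i\<in>{1..<s}. 1 - z ^ i)" unfolding poly_qpoch iv z_def ..
    then show ?thesis using True pr by simp
  next
    case False
    define g where "g = gcd l s"
    have g1: "g \<noteq> 1" using False unfolding g_def by (simp add: coprime_iff_gcd_eq_1)
    have gpos: "g > 0" using s unfolding g_def by simp
    have gs: "g dvd s" "g dvd l" unfolding g_def by auto
    define d where "d = s div g"
    have ds: "s = d * g" using gs unfolding d_def by simp
    have d1: "1 \<le> d" using ds s by (cases d) auto
    have "g \<ge> 2" using g1 gpos by simp
    then have "d * 1 < d * g" using d1 by (intro mult_strict_left_mono) auto
    then have "d < s" using ds by simp
    obtain l' where l': "l = g * l'" using gs by (auto elim!: dvdE)
    have "s dvd l * d" using ds l' by (simp add: mult_ac)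
    then have "(omega s ^ l) ^ d = 1" using s by (simp flip: power_mult add: omega_pow_eq_1)
    then have "\<exists>i\<in>{1..<s}. 1 - (omega s ^ l) ^ i = 0" using d1 \<open>d < s\<close> by (intro bexI[of _ d]) auto
    then have "poly (qpoch (s - 1)) (omega s ^ l) = 0" unfolding poly_qpoch iv by (simp only: prod_zero_iff finite_atLeastLessThan)
    then show ?thesis using False by simp
  qed
qed

lemma coprime_sub_iff: "(l::nat) \<le> s \<Longrightarrow> coprime (s - l) s \<longleftrightarrow> coprime l s"
  by (simp add: coprime_iff_gcd_eq_1 gcd_diff2_nat)

theorem proposition2p16:
  fixes k s :: nat and t :: int
  assumes "0 < k" and "0 < s" and "s dvd k"
    and "0 \<le> t" and "t \<le> int s - 1"
  shows "ramanujan_sum s t = (\<Sum>j=0..<k div s. sigma0 k (j * s + nat t) s)"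
proof -
  define u where "u = nat t"
  have tu: "t = int u" using assms(4) unfolding u_def by simp
  have us: "u < s" using assms(5) tu by simp
  have s: "0 < s" by fact
  define M where "M = (1 - monom 1 k :: complex poly)"
  define P where "P = qpoch (s - 1)"
  define R where "R = P mod M"
  have dM: "degree M = k"
  proof -
    have "M = - monom 1 k + 1" unfolding M_def by simp
    also have "degree \<dots> = k" using assms(1) by (subst degree_add_eq_left) (auto simp: degree_monom_eq)
    finally show ?thesis .
  qed
  have M0: "M \<noteq> 0" using dM assms(1) by auto
  have dR: "degree R < k"
    using degree_mod_less[OF M0, of P] dM assms(1) unfolding R_def by auto
  have polyR: "poly R (omega s ^ l) = poly P (omega s ^ l)" for l
  proof -
    have "(omega s ^ l) ^ k = 1"
      using s assms(3) by (simp flip: power_mult add: omega_pow_eq_1)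
    then have "poly M (omega s ^ l) = 0" unfolding M_def by (simp add: poly_monom)
    moreover have "P = P div M * M + R" unfolding R_def by simp
    ultimately show ?thesis by (metis poly_add poly_mult mult_zero_right add_0)
  qed
  define L where "L = {l. l < s \<and> coprime l s}"
  have "(\<Sum>j=0..<k div s. sigma0 k (j * s + nat t) s) = (\<Sum>n\<in>{n. n < k \<and> n mod s = u}. coeff R n)"
    unfolding sigma0_def u_def[symmetric] R_def P_def M_def
    by (rule reindex_lemma[OF s assms(3) us])
  moreover have "of_nat s * (\<Sum>n\<in>{n. n < k \<and> n mod s = u}. coeff R n)
     = (\<Sum>l<s. omega s ^ (l * (s - u)) * poly R (omega s ^ l))"
    by (rule filter_lemma[OF dR us, symmetric])
  moreover have "(\<Sum>l<s. omega s ^ (l * (s - u)) * poly R (omega s ^ l))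
     = (\<Sum>l<s. if coprime l s then omega s ^ (l * (s - u)) * of_nat s else 0)"
  proof (intro sum.cong refl)
    fix l assume "l \<in> {..<s}"
    then have "poly R (omega s ^ l) = (if coprime l s then of_nat s else 0)"
      using polyR[of l] poly_qpoch_omega[OF s, of l] unfolding P_def by simp
    then show "omega s ^ (l * (s - u)) * poly R (omega s ^ l) = (if coprime l s then omega s ^ (l * (s - u)) * of_nat s else 0)"
      by simp
  qed
  moreover have "\<dots> = of_nat s * (\<Sum>l\<in>L. omega s ^ (l * (s - u)))"
  proof -
    have "L = {l \<in> {..<s}. coprime l s}" unfolding L_def by auto
    then have "(\<Sum>l\<in>L. omega s ^ (l * (s - u)) * of_nat s) = (\<Sum>l<s. if coprime l s then omega s ^ (l * (s - u)) * of_nat s else 0)"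
      by (simp only: sum.inter_filter[OF finite_lessThan])
    then show ?thesis by (simp add: sum_distrib_left mult.commute)
  qed
  ultimately have rhs: "(\<Sum>j=0..<k div s. sigma0 k (j * s + nat t) s) = (\<Sum>l\<in>L. omega s ^ (l * (s - u)))"
    using s by simp
  have "ramanujan_sum s t = (\<Sum>h\<in>{h. 1 \<le> h \<and> h \<le> s \<and> coprime h s}. omega s ^ (h * u))"
    unfolding ramanujan_sum_def omega_pow tu by (simp add: mult_ac)
  also have "\<dots> = (\<Sum>l\<in>L. omega s ^ (l * (s - u)))"
  proof (rule sum.reindex_bij_witness[of _ "\<lambda>l. s - l" "\<lambda>h. s - h"])
    fix l assume "l \<in> L"
    then have l: "l < s" "coprime l s" unfolding L_def by auto
    show "s - (s - l) = l" using l by simp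
    show "s - l \<in> {h. 1 \<le> h \<and> h \<le> s \<and> coprime h s}"
      using l by (auto simp: coprime_sub_iff)
  next
    fix h assume "h \<in> {h. 1 \<le> h \<and> h \<le> s \<and> coprime h s}"
    then have h: "1 \<le> h" "h \<le> s" "coprime h s" by auto
    show "s - (s - h) = h" using h by simp
    show "s - h \<in> L" using h unfolding L_def by (auto simp: coprime_sub_iff)
    have e: "(s - h) * (s - u) + (h * s + s * u) = h * u + s * s"
    proof -
      have "int ((s - h) * (s - u) + (h * s + s * u)) = int (h * u + s * s)"
      proof -
        have d1: "int (s - h) = int s - int h" using h(2) by (simp add: of_nat_diff)
        have d2: "int (s - u) = int s - int u" using us by (simp add: of_nat_diff)
        show ?thesis unfolding of_nat_add of_nat_mult d1 d2 by algebra
      qed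
      then show ?thesis by (simp only: of_nat_eq_iff)
    qed
    have one: "omega s ^ (h * s + s * u) = 1" "omega s ^ (s * s) = 1"
      using s by (simp_all add: omega_pow_eq_1)
    have "omega s ^ ((s - h) * (s - u)) = omega s ^ ((s - h) * (s - u) + (h * s + s * u))"
      using one by (simp add: power_add)
    also have "\<dots> = omega s ^ (h * u + s * s)" by (simp only: e)
    also have "\<dots> = omega s ^ (h * u)" using one by (simp add: power_add)
    finally show "omega s ^ ((s - h) * (s - u)) = omega s ^ (h * u)" .
  qed
  finally show ?thesis using rhs by simp
qed

end
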